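(* The map $\mathbf{x}\mapsto(\mathbf{s},h)$, defined on $\mathbb{R}^3\setminus\mathbb{I}$, is injective, where $\mathbf{s}$ is the dispersed projection of $\mathbf{x}$ onto $\mathcal{M}$ and $h$ is its signed height: $h=\|\mathbf{x}-\mathbf{s}\|$ if $\mathbf{x}$ is outside the region enclosed by $\mathcal{M}$ and $h=-\|\mathbf{x}-\mathbf{s}\|$ if $\mathbf{x}$ is inside. That is, if $\mathbf{x}_1,\mathbf{x}_2\in\mathbb{R}^3\setminus\mathbb{I}$ have equal $(\mathbf{s},h)$, then $\mathbf{x}_1=\mathbf{x}_2$.
   Context: Let $\mathcal{M}$ be a triangle mesh in $\mathbb{R}^3$ that is watertight (closed, without self-intersections) and has no faces of zero area. Each face $T=(\mathbf{v}_1,\mathbf{v}_2,\mathbf{v}_3)$ has an outward unit face normal $\mathbf{n}_T$; each vertex $\mathbf{v}$ has a unit vertex normal $\mathbf{n}_{\mathbf{v}}$, and for every face $T$ and every vertex $\mathbf{v}$ of $T$, $\langle \mathbf{n}_{\mathbf{v}},\mathbf{n}_T\rangle>0$. Vertex normal alignment of a face $T$ with orientation $\sigma\in\{+1,-1\}$: put $\mathbf{m}_T=\sigma\mathbf{n}_T$; for each $i\in\{1,2,3\}$ let $j,k$ be the other two indices, $\mathbf{e}_1=\mathbf{v}_j-\mathbf{v}_i$, $\mathbf{e}_2=\mathbf{v}_k-\mathbf{v}_i$, $\mathbf{m}_i=\sigma\mathbf{n}_{\mathbf{v}_i}$, write the in-plane part $\mathbf{m}_i-\langle\mathbf{m}_i,\mathbf{m}_T\rangle\mathbf{m}_T=c_1\mathbf{e}_1+c_2\mathbf{e}_2$,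 and define the aligned normal $\hat{\mathbf{n}}^{T,\sigma}_i=(\mathbf{m}_i-\max(0,c_1)\mathbf{e}_1-\max(0,c_2)\mathbf{e}_2)/\|\mathbf{m}_i-\max(0,c_1)\mathbf{e}_1-\max(0,c_2)\mathbf{e}_2\|$. (Aligned normals depend on the face $T$, not only on the vertex.) Barycentric interpolated projection onto $T$ with orientation $\sigma$: for $\mathbf{x}$ with $l:=\langle\mathbf{x}-\mathbf{v}_1,\sigma\mathbf{n}_T\rangle\ge 0$, set $\mathbf{v}_i'=\mathbf{v}_i+\big(l/\langle\hat{\mathbf{n}}^{T,\sigma}_i,\sigma\mathbf{n}_T\rangle\big)\hat{\mathbf{n}}^{T,\sigma}_i$, forming the parallel triangle $T'=(\mathbf{v}_1',\mathbf{v}_2',\mathbf{v}_3')$ in the plane through $\mathbf{x}$ parallel to $T$. If $\mathbf{x}\in T'$, i.e. $\mathbf{x}=\sum_i\alpha_i\mathbf{v}_i'$ with $\alpha_i\ge0$, $\sum_i\alpha_i=1$, the projection is $\mathbf{s}_T=\sum_i\alpha_i\mathbf{v}_i$. Dispersed projection of $\mathbf{x}$ (with $\sigma=+1$ if $\mathbf{x}$ is outside the region enclosed by $\mathcal{M}$ and $\sigma=-1$ if inside): (1) compute the nearest point $\tilde{\mathbf{s}}$ of $\mathcal{M}$ to $\mathbf{x}$; (2) let $\mathcal{T}$ be the set of faces containing $\tilde{\mathbf{s}}$; (3) apply vertex normal alignment with orientation $\sigma$ to each $T\in\mathcal{T}$; (4) discard those $T$ with $\mathbf{x}\notin T'$;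 (5) compute $\mathbf{s}_T$ for the remaining $T$; (6) let $\mathbf{s}$ be the $\mathbf{s}_T$ nearest to $\mathbf{x}$. It is assumed that for every $\mathbf{x}\in\mathbb{R}^3$ at least one face survives step (4), so $\mathbf{s}$ is defined. Exceptional set: for a face $T$, orientation $\sigma$, and $\mathbf{a}^{T,\sigma}_i=\hat{\mathbf{n}}^{T,\sigma}_i/\langle\hat{\mathbf{n}}^{T,\sigma}_i,\sigma\mathbf{n}_T\rangle$, let $\mathbb{I}$ be the union over all faces $T$, both $\sigma$, and all pairs of distinct vertices $\mathbf{v}_i,\mathbf{v}_j$ of $T$ of the bilinear surfaces $\{(1-u)\mathbf{v}_i+u\mathbf{v}_j+t((1-u)\mathbf{a}^{T,\sigma}_i+u\mathbf{a}^{T,\sigma}_j): u\in[0,1],t\ge0\}$ (a set of Lebesgue measure zero). For $\mathbf{x}\notin\mathbb{I}$, the dispersed projection $\mathbf{s}$ lies in the relative interior of a face. *)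

theory Defs
  imports "HOL-Analysis.Analysis"
begin

type_synonym pt = "real^3"
type_synonym face = "pt \<times> pt \<times> pt"

definition vtx :: "face \<Rightarrow> nat \<Rightarrow> pt" where
  "vtx T i = (if i = 0 then fst T else if i = 1 then fst (snd T) else snd (snd T))"

definition verts :: "face \<Rightarrow> pt set" where
  "verts T = {vtx T 0, vtx T 1, vtx T 2}"

definition tri :: "face \<Rightarrow> pt set" where
  "tri T = convex hull (verts T)"

definition surf :: "face set \<Rightarrow> pt set" where
  "surf M = (\<Union>T\<in>M. tri T)"

text \<open>Watertight triangle mesh without zero-area faces: finitely many, non-degenerate
  faces; distinct faces have distinct vertex sets; every edge of a face is shared by
  exactly two faces (closed); two distinct faces meet only in the common sub-simplex
  (no self-intersections).\<close>
definition watertight_mesh :: "face set \<Rightarrow> bool" where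
  "watertight_mesh M \<longleftrightarrow> finite M \<and> M \<noteq> {} \<and>
     (\<forall>T\<in>M. \<not> collinear (verts T)) \<and>
     (\<forall>T\<in>M. \<forall>T'\<in>M. verts T = verts T' \<longrightarrow> T = T') \<and>
     (\<forall>T\<in>M. \<forall>a\<in>verts T. \<forall>b\<in>verts T. a \<noteq> b \<longrightarrow>
          card {T'\<in>M. {a, b} \<subseteq> verts T'} = 2) \<and>
     (\<forall>T\<in>M. \<forall>T'\<in>M. T \<noteq> T' \<longrightarrow> tri T \<inter> tri T' = convex hull (verts T \<inter> verts T'))"

definition centroid :: "face \<Rightarrow> pt" where
  "centroid T = (1/3) *\<^sub>R (vtx T 0 + vtx T 1 + vtx T 2)"

definition valid_normals :: "face set \<Rightarrow> (face \<Rightarrow> pt) \<Rightarrow> (pt \<Rightarrow> pt) \<Rightarrow> bool" where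
  "valid_normals M nf nv \<longleftrightarrow>
     (\<forall>T\<in>M. norm (nf T) = 1 \<and>
        (\<forall>i<3. \<forall>j<3. nf T \<bullet> (vtx T j - vtx T i) = 0) \<and>
        (\<exists>e>0. \<forall>t. 0 < t \<and> t < e \<longrightarrow> centroid T + t *\<^sub>R nf T \<in> outside (surf M))) \<and>
     (\<forall>T\<in>M. \<forall>v\<in>verts T. norm (nv v) = 1 \<and> nv v \<bullet> nf T > 0)"

definition aligned_normal :: "(face \<Rightarrow> pt) \<Rightarrow> (pt \<Rightarrow> pt) \<Rightarrow> face \<Rightarrow> real \<Rightarrow> nat \<Rightarrow> pt" where
  "aligned_normal nf nv T \<sigma> i =
     (let j = (i + 1) mod 3; k = (i + 2) mod 3;
          e1 = vtx T j - vtx T i; e2 = vtx T k - vtx T i;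
          mT = \<sigma> *\<^sub>R nf T; mi = \<sigma> *\<^sub>R nv (vtx T i);
          w = mi - (mi \<bullet> mT) *\<^sub>R mT;
          c = (THE c :: real \<times> real. w = fst c *\<^sub>R e1 + snd c *\<^sub>R e2);
          u = mi - max 0 (fst c) *\<^sub>R e1 - max 0 (snd c) *\<^sub>R e2
      in u /\<^sub>R norm u)"

definition height_over :: "(face \<Rightarrow> pt) \<Rightarrow> face \<Rightarrow> real \<Rightarrow> pt \<Rightarrow> real" where
  "height_over nf T \<sigma> x = (x - vtx T 0) \<bullet> (\<sigma> *\<^sub>R nf T)"

definition lifted_vertex :: "(face \<Rightarrow> pt) \<Rightarrow> (pt \<Rightarrow> pt) \<Rightarrow> face \<Rightarrow> real \<Rightarrow> pt \<Rightarrow> nat \<Rightarrow> pt" where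
  "lifted_vertex nf nv T \<sigma> x i =
     vtx T i + (height_over nf T \<sigma> x / (aligned_normal nf nv T \<sigma> i \<bullet> (\<sigma> *\<^sub>R nf T)))
                 *\<^sub>R aligned_normal nf nv T \<sigma> i"

text \<open>x lies in the parallel triangle T' (face T survives step (4)).\<close>
definition in_parallel :: "(face \<Rightarrow> pt) \<Rightarrow> (pt \<Rightarrow> pt) \<Rightarrow> face \<Rightarrow> real \<Rightarrow> pt \<Rightarrow> bool" where
  "in_parallel nf nv T \<sigma> x \<longleftrightarrow> height_over nf T \<sigma> x \<ge> 0 \<and>
     (\<exists>\<alpha>::nat \<Rightarrow> real. (\<forall>i<3. \<alpha> i \<ge> 0) \<and> (\<Sum>i<3. \<alpha> i) = 1 \<and>
        x = (\<Sum>i<3. \<alpha> i *\<^sub>R lifted_vertex nf nv T \<sigma> x i))"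

definition bip_proj :: "(face \<Rightarrow> pt) \<Rightarrow> (pt \<Rightarrow> pt) \<Rightarrow> face \<Rightarrow> real \<Rightarrow> pt \<Rightarrow> pt \<Rightarrow> bool" where
  "bip_proj nf nv T \<sigma> x s \<longleftrightarrow> height_over nf T \<sigma> x \<ge> 0 \<and>
     (\<exists>\<alpha>::nat \<Rightarrow> real. (\<forall>i<3. \<alpha> i \<ge> 0) \<and> (\<Sum>i<3. \<alpha> i) = 1 \<and>
        x = (\<Sum>i<3. \<alpha> i *\<^sub>R lifted_vertex nf nv T \<sigma> x i) \<and>
        s = (\<Sum>i<3. \<alpha> i *\<^sub>R vtx T i))"

definition orient :: "face set \<Rightarrow> pt \<Rightarrow> real" where
  "orient M x = (if x \<in> inside (surf M) then -1 else 1)"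

definition nearest_point :: "face set \<Rightarrow> pt \<Rightarrow> pt \<Rightarrow> bool" where
  "nearest_point M x p \<longleftrightarrow> p \<in> surf M \<and> (\<forall>y\<in>surf M. dist x p \<le> dist x y)"

definition candidates :: "face set \<Rightarrow> (face \<Rightarrow> pt) \<Rightarrow> (pt \<Rightarrow> pt) \<Rightarrow> pt \<Rightarrow> pt \<Rightarrow> pt set" where
  "candidates M nf nv x p = {s. \<exists>T\<in>M. p \<in> tri T \<and> bip_proj nf nv T (orient M x) x s}"

text \<open>s is a dispersed projection of x (relational: allows any choice of nearest
  point and any tie-breaking).\<close>
definition disp_proj :: "face set \<Rightarrow> (face \<Rightarrow> pt) \<Rightarrow> (pt \<Rightarrow> pt) \<Rightarrow> pt \<Rightarrow> pt \<Rightarrow> bool" where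
  "disp_proj M nf nv x s \<longleftrightarrow> (\<exists>p. nearest_point M x p \<and> s \<in> candidates M nf nv x p \<and>
       (\<forall>s'\<in>candidates M nf nv x p. dist x s \<le> dist x s'))"

definition signed_height :: "face set \<Rightarrow> pt \<Rightarrow> pt \<Rightarrow> real" where
  "signed_height M x s = orient M x * norm (x - s)"

definition align_dir :: "(face \<Rightarrow> pt) \<Rightarrow> (pt \<Rightarrow> pt) \<Rightarrow> face \<Rightarrow> real \<Rightarrow> nat \<Rightarrow> pt" where
  "align_dir nf nv T \<sigma> i =
     aligned_normal nf nv T \<sigma> i /\<^sub>R (aligned_normal nf nv T \<sigma> i \<bullet> (\<sigma> *\<^sub>R nf T))"

definition exc_set :: "face set \<Rightarrow> (face \<Rightarrow> pt) \<Rightarrow> (pt \<Rightarrow> pt) \<Rightarrow> pt set" where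
  "exc_set M nf nv = (\<Union>T\<in>M. \<Union>\<sigma>\<in>{1, -1}. \<Union>i\<in>{0,1,2}. \<Union>j\<in>{0,1,2} - {i}.
     {(1 - u) *\<^sub>R vtx T i + u *\<^sub>R vtx T j
        + t *\<^sub>R ((1 - u) *\<^sub>R align_dir nf nv T \<sigma> i + u *\<^sub>R align_dir nf nv T \<sigma> j) | u t.
      0 \<le> u \<and> u \<le> 1 \<and> 0 \<le> t})"

end

theory Submission
  imports Defs
begin

lemma bary_unique:
  fixes a b c :: "real^3"
  assumes nc: "\<not> collinear {a,b,c}" and s: "p+q+r = p'+q'+r'"
    and e: "p*\<^sub>R a + q*\<^sub>R b + r*\<^sub>R c = p'*\<^sub>R a + q'*\<^sub>R b + r'*\<^sub>R c"
  shows "p=p' \<and> q=q' \<and> r=r'"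
proof -
  define dq where "dq = q - q'"
  define dr where "dr = r - r'"
  have pp: "p - p' = -(dq+dr)" using s unfolding dq_def dr_def by simp
  have "(p-p') *\<^sub>R a + dq *\<^sub>R b + dr *\<^sub>R c = 0"
    using e unfolding dq_def dr_def by (simp add: algebra_simps)
  hence z: "dq *\<^sub>R (b - a) + dr *\<^sub>R (c - a) = 0" using pp by (simp add: algebra_simps)
  have "dq = 0"
  proof (rule ccontr)
    assume h: "dq \<noteq> 0"
    have "b = (1 + dr/dq) *\<^sub>R a + (1 - (1 + dr/dq)) *\<^sub>R c"
    proof -
      have "dq *\<^sub>R b = dq *\<^sub>R ((1 + dr/dq) *\<^sub>R a + (1 - (1 + dr/dq)) *\<^sub>R c)"
        using z h by (simp add: algebra_simps)
      thus ?thesis using h by simp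
    qed
    hence "collinear {a,b,c}" unfolding collinear_3_expand by blast
    thus False using nc by simp
  qed
  moreover have "dr = 0"
  proof (rule ccontr)
    assume h: "dr \<noteq> 0"
    have "c - a = 0" using z \<open>dq = 0\<close> h by simp
    hence "collinear {a,b,c}" by (simp add: insert_commute)
    thus False using nc by simp
  qed
  ultimately show ?thesis using pp unfolding dq_def dr_def by simp
qed

lemma sum3: "(\<Sum>i<(3::nat). f i) = f 0 + f 1 + (f 2 :: 'a::comm_monoid_add)"
  by (simp add: eval_nat_numeral add_ac)

lemma lifted_eq: "lifted_vertex nf nv T \<sigma> x i = vtx T i + height_over nf T \<sigma> x *\<^sub>R align_dir nf nv T \<sigma> i"
  unfolding lifted_vertex_def align_dir_def by (simp add: divide_inverse)

lemma exc_mem: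
  assumes "T \<in> M" "\<sigma> \<in> {1,-1}" "i \<in> {0,1,2}" "j \<in> {0,1,2}" "i \<noteq> j" "0 \<le> u" "u \<le> 1" "0 \<le> t"
  shows "(1 - u) *\<^sub>R vtx T i + u *\<^sub>R vtx T j
        + t *\<^sub>R ((1 - u) *\<^sub>R align_dir nf nv T \<sigma> i + u *\<^sub>R align_dir nf nv T \<sigma> j) \<in> exc_set M nf nv"
  unfolding exc_set_def
  apply (rule UN_I[OF assms(1)], rule UN_I[OF assms(2)], rule UN_I[OF assms(3)], rule UN_I[of j])
   apply (use assms in simp)
  apply (rule CollectI)
  apply (rule exI[of _ u], rule exI[of _ t])
  using assms by simp

lemma rep:
  assumes x: "x \<notin> exc_set M nf nv" and T: "T \<in> M" and sg: "\<sigma> \<in> {1,-1}"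
    and b: "bip_proj nf nv T \<sigma> x s"
  shows "\<exists>(\<alpha>::nat\<Rightarrow>real) l. \<alpha> 0 > 0 \<and> \<alpha> 1 > 0 \<and> \<alpha> 2 > 0 \<and> \<alpha> 0 + \<alpha> 1 + \<alpha> 2 = 1 \<and>
     s = \<alpha> 0 *\<^sub>R vtx T 0 + \<alpha> 1 *\<^sub>R vtx T 1 + \<alpha> 2 *\<^sub>R vtx T 2 \<and> l \<ge> 0 \<and>
     x = s + l *\<^sub>R (\<alpha> 0 *\<^sub>R align_dir nf nv T \<sigma> 0 + \<alpha> 1 *\<^sub>R align_dir nf nv T \<sigma> 1
                      + \<alpha> 2 *\<^sub>R align_dir nf nv T \<sigma> 2)"
proof -
  define l where "l = height_over nf T \<sigma> x"
  define a where "a = align_dir nf nv T \<sigma>"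
  from b obtain \<alpha> where l0: "l \<ge> 0" and pos: "\<forall>i<3. \<alpha> i \<ge> 0" and s1: "(\<Sum>i<3. \<alpha> i) = 1"
    and xe: "x = (\<Sum>i<3. \<alpha> i *\<^sub>R lifted_vertex nf nv T \<sigma> x i)"
    and se: "s = (\<Sum>i<3. \<alpha> i *\<^sub>R vtx T i)"
    unfolding bip_proj_def l_def by blast
  have p0: "\<alpha> 0 \<ge> 0" and p1: "\<alpha> 1 \<ge> 0" and p2: "\<alpha> 2 \<ge> 0" using pos by auto
  have su: "\<alpha> 0 + \<alpha> 1 + \<alpha> 2 = 1" using s1 by (simp add: sum3)
  have se': "s = \<alpha> 0 *\<^sub>R vtx T 0 + \<alpha> 1 *\<^sub>R vtx T 1 + \<alpha> 2 *\<^sub>R vtx T 2" using se by (simp add: sum3)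
  have xe': "x = \<alpha> 0 *\<^sub>R vtx T 0 + \<alpha> 1 *\<^sub>R vtx T 1 + \<alpha> 2 *\<^sub>R vtx T 2
     + l *\<^sub>R (\<alpha> 0 *\<^sub>R a 0 + \<alpha> 1 *\<^sub>R a 1 + \<alpha> 2 *\<^sub>R a 2)"
    using xe unfolding sum3 lifted_eq l_def[symmetric] a_def[symmetric]
    by (simp add: algebra_simps)
  have n0: "\<alpha> 0 \<noteq> 0"
  proof
    assume h: "\<alpha> 0 = 0"
    have "x = (1 - \<alpha> 2) *\<^sub>R vtx T 1 + \<alpha> 2 *\<^sub>R vtx T 2
        + l *\<^sub>R ((1 - \<alpha> 2) *\<^sub>R align_dir nf nv T \<sigma> 1 + \<alpha> 2 *\<^sub>R align_dir nf nv T \<sigma> 2)"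
    proof -
      have e: "1 - \<alpha> 2 = \<alpha> 1" using su h by simp
      show ?thesis using xe' h unfolding a_def e by (simp add: scaleR_add_right)
    qed
    moreover have "\<dots> \<in> exc_set M nf nv"
      by (rule exc_mem) (use T sg p2 su p1 h l0 in auto)
    ultimately show False using x by simp
  qed
  have n1: "\<alpha> 1 \<noteq> 0"
  proof
    assume h: "\<alpha> 1 = 0"
    have "x = (1 - \<alpha> 2) *\<^sub>R vtx T 0 + \<alpha> 2 *\<^sub>R vtx T 2
        + l *\<^sub>R ((1 - \<alpha> 2) *\<^sub>R align_dir nf nv T \<sigma> 0 + \<alpha> 2 *\<^sub>R align_dir nf nv T \<sigma> 2)"
    proof -
      have e: "1 - \<alpha> 2 = \<alpha> 0" using su h by simp
      show ?thesis using xe' h unfolding a_def e by (simp add: scaleR_add_right)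
    qed
    moreover have "\<dots> \<in> exc_set M nf nv"
      by (rule exc_mem) (use T sg p2 su p0 h l0 in auto)
    ultimately show False using x by simp
  qed
  have n2: "\<alpha> 2 \<noteq> 0"
  proof
    assume h: "\<alpha> 2 = 0"
    have "x = (1 - \<alpha> 1) *\<^sub>R vtx T 0 + \<alpha> 1 *\<^sub>R vtx T 1
        + l *\<^sub>R ((1 - \<alpha> 1) *\<^sub>R align_dir nf nv T \<sigma> 0 + \<alpha> 1 *\<^sub>R align_dir nf nv T \<sigma> 1)"
    proof -
      have e: "1 - \<alpha> 1 = \<alpha> 0" using su h by simp
      show ?thesis using xe' h unfolding a_def e by (simp add: scaleR_add_right)
    qed
    moreover have "\<dots> \<in> exc_set M nf nv"
      by (rule exc_mem) (use T sg p1 su p0 h l0 in auto)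
    ultimately show False using x by simp
  qed
  have q0: "\<alpha> 0 > 0" using n0 p0 by simp
  have q1: "\<alpha> 1 > 0" using n1 p1 by simp
  have q2: "\<alpha> 2 > 0" using n2 p2 by simp
  have xx: "x = s + l *\<^sub>R (\<alpha> 0 *\<^sub>R align_dir nf nv T \<sigma> 0 + \<alpha> 1 *\<^sub>R align_dir nf nv T \<sigma> 1
                      + \<alpha> 2 *\<^sub>R align_dir nf nv T \<sigma> 2)" using xe' se' unfolding a_def by simp
  have H: "\<alpha> 0 > 0 \<and> \<alpha> 1 > 0 \<and> \<alpha> 2 > 0 \<and> \<alpha> 0 + \<alpha> 1 + \<alpha> 2 = 1 \<and>
     s = \<alpha> 0 *\<^sub>R vtx T 0 + \<alpha> 1 *\<^sub>R vtx T 1 + \<alpha> 2 *\<^sub>R vtx T 2 \<and> l \<ge> 0 \<and>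
     x = s + l *\<^sub>R (\<alpha> 0 *\<^sub>R align_dir nf nv T \<sigma> 0 + \<alpha> 1 *\<^sub>R align_dir nf nv T \<sigma> 1
                      + \<alpha> 2 *\<^sub>R align_dir nf nv T \<sigma> 2)" using q0 q1 q2 su se' l0 xx by (intro conjI)
  show ?thesis by (rule exI[of _ \<alpha>], rule exI[of _ l], rule H)
qed

lemma not_seg:
  fixes a b c s :: "real^3"
  assumes nc: "\<not> collinear {a,b,c}" and s: "s = p *\<^sub>R a + q *\<^sub>R b + r *\<^sub>R c"
    and su: "p+q+r = 1" and p: "p > 0"
  shows "s \<notin> convex hull {b,c}"
proof
  assume "s \<in> convex hull {b,c}"
  then obtain u v where uv: "u + v = 1" and e: "s = u *\<^sub>R b + v *\<^sub>R c"
    unfolding convex_hull_2 by blast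
  have "p = 0 \<and> q = u \<and> r = v"
    by (rule bary_unique[OF nc]) (use su uv s e in auto)
  thus False using p by simp
qed

lemma face_eq:
  assumes W: "watertight_mesh M" and T1: "T1 \<in> M" and T2: "T2 \<in> M"
    and a0: "\<alpha> 0 > 0" and a1: "\<alpha> 1 > 0" and a2: "\<alpha> 2 > 0" and su: "\<alpha> 0 + \<alpha> 1 + \<alpha> 2 = 1"
    and s: "s = \<alpha> 0 *\<^sub>R vtx T1 0 + \<alpha> 1 *\<^sub>R vtx T1 1 + \<alpha> 2 *\<^sub>R vtx T1 2"
    and s2: "s \<in> tri T2"
  shows "T1 = T2"
proof (rule ccontr)
  assume ne: "T1 \<noteq> T2"
  have nc: "\<not> collinear {vtx T1 0, vtx T1 1, vtx T1 2}"
    using W T1 unfolding watertight_mesh_def verts_def by blast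
  have s1: "s \<in> tri T1" unfolding tri_def verts_def convex_hull_3
    using s su a0 a1 a2 by (intro CollectI exI[of _ "\<alpha> 0"] exI[of _ "\<alpha> 1"] exI[of _ "\<alpha> 2"]) auto
  have si: "s \<in> convex hull (verts T1 \<inter> verts T2)"
    using W T1 T2 ne s1 s2 unfolding watertight_mesh_def by blast
  have d01: "vtx T1 0 \<noteq> vtx T1 1"
  proof
    assume h: "vtx T1 0 = vtx T1 1"
    hence "{vtx T1 0, vtx T1 1, vtx T1 2} = {vtx T1 1, vtx T1 2}" by auto
    thus False using nc by simp
  qed
  have d02: "vtx T1 0 \<noteq> vtx T1 2"
  proof
    assume h: "vtx T1 0 = vtx T1 2"
    hence "{vtx T1 0, vtx T1 1, vtx T1 2} = {vtx T1 2, vtx T1 1}" by auto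
    thus False using nc by simp
  qed
  have d12: "vtx T1 1 \<noteq> vtx T1 2"
  proof
    assume h: "vtx T1 1 = vtx T1 2"
    hence "{vtx T1 0, vtx T1 1, vtx T1 2} = {vtx T1 2, vtx T1 0}" by auto
    thus False using nc by simp
  qed
  show False
  proof (cases "verts T1 \<subseteq> verts T2")
    case True
    have c1: "card (verts T1) = 3" unfolding verts_def using d01 d02 d12 by simp
    have c2: "card (verts T2) \<le> 3" unfolding verts_def by (simp add: card_insert_le_m1)
    have "verts T1 = verts T2"
      by (rule card_subset_eq) (use True c1 c2 card_mono[OF _ True] in \<open>auto simp: verts_def\<close>)
    hence "T1 = T2" using W T1 T2 unfolding watertight_mesh_def by blast
    thus False using ne by simp
  next
    case False
    then obtain m where m: "m \<in> {0,1,2::nat}" "vtx T1 m \<notin> verts T2"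
      unfolding verts_def by auto
    show False
    proof -
      { assume "m = 0"
        hence "verts T1 \<inter> verts T2 \<subseteq> {vtx T1 1, vtx T1 2}" using m unfolding verts_def by auto
        hence "s \<in> convex hull {vtx T1 1, vtx T1 2}" using si hull_mono by blast
        moreover have "s \<notin> convex hull {vtx T1 1, vtx T1 2}"
          by (rule not_seg[OF nc s su a0])
        ultimately have False by blast }
      moreover
      { assume "m = 1"
        hence "verts T1 \<inter> verts T2 \<subseteq> {vtx T1 0, vtx T1 2}" using m unfolding verts_def by auto
        hence "s \<in> convex hull {vtx T1 0, vtx T1 2}" using si hull_mono by blast
        moreover have "s \<notin> convex hull {vtx T1 0, vtx T1 2}"
          by (rule not_seg[of "vtx T1 1" _ _ _ "\<alpha> 1" "\<alpha> 0" "\<alpha> 2"])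
             (use nc s su a1 in \<open>simp_all add: insert_commute algebra_simps\<close>)
        ultimately have False by blast }
      moreover
      { assume "m = 2"
        hence "verts T1 \<inter> verts T2 \<subseteq> {vtx T1 0, vtx T1 1}" using m unfolding verts_def by auto
        hence "s \<in> convex hull {vtx T1 0, vtx T1 1}" using si hull_mono by blast
        moreover have "s \<notin> convex hull {vtx T1 0, vtx T1 1}"
          by (rule not_seg[of "vtx T1 2" _ _ _ "\<alpha> 2" "\<alpha> 0" "\<alpha> 1"])
             (use nc s su a2 in \<open>simp_all add: insert_commute algebra_simps\<close>)
        ultimately have False by blast }
      ultimately show False using m by auto
    qed
  qed
qed

lemma get_face:
  assumes "disp_proj M nf nv x s"
  shows "\<exists>T\<in>M. bip_proj nf nv T (orient M x) x s"
  using assms unfolding disp_proj_def candidates_def by blast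

lemma orient_cases: "orient M x \<in> {1,-1}"
  unfolding orient_def by simp

lemma in_tri:
  assumes "\<alpha> 0 \<ge> 0" "\<alpha> 1 \<ge> 0" "\<alpha> 2 \<ge> 0" "\<alpha> 0 + \<alpha> 1 + \<alpha> 2 = 1"
    "s = \<alpha> 0 *\<^sub>R vtx T 0 + \<alpha> 1 *\<^sub>R vtx T 1 + \<alpha> 2 *\<^sub>R vtx T 2"
  shows "s \<in> tri T"
  unfolding tri_def verts_def convex_hull_3
  using assms by (intro CollectI exI[of _ "\<alpha> 0"] exI[of _ "\<alpha> 1"] exI[of _ "\<alpha> 2"]) auto

theorem lemma2:
  fixes M :: "face set" and nf :: "face \<Rightarrow> real^3" and nv :: "real^3 \<Rightarrow> real^3"
    and x1 x2 s :: "real^3"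
  assumes "watertight_mesh M"
    and "valid_normals M nf nv"
    and "\<forall>x p. nearest_point M x p \<longrightarrow>
           (\<exists>T\<in>M. p \<in> tri T \<and> in_parallel nf nv T (orient M x) x)"
    and "x1 \<notin> exc_set M nf nv" and "x2 \<notin> exc_set M nf nv"
    and "disp_proj M nf nv x1 s" and "disp_proj M nf nv x2 s"
    and "signed_height M x1 s = signed_height M x2 s"
  shows "x1 = x2"
proof (cases "orient M x1 = orient M x2")
  case False
  have h: "orient M x1 * norm (x1 - s) = orient M x2 * norm (x2 - s)"
    using assms(8) unfolding signed_height_def .
  have "orient M x1 = - orient M x2" using False orient_cases[of M x1] orient_cases[of M x2] by auto
  hence "norm (x1 - s) = - norm (x2 - s)" using h orient_cases[of M x2] by auto
  hence "norm (x1 - s) = 0 \<and> norm (x2 - s) = 0"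
    using norm_ge_zero[of "x1 - s"] norm_ge_zero[of "x2 - s"] by linarith
  thus ?thesis by simp
next
  case True
  define \<sigma> where "\<sigma> = orient M x1"
  have sg: "\<sigma> \<in> {1,-1}" unfolding \<sigma>_def by (rule orient_cases)
  have nn: "norm (x1 - s) = norm (x2 - s)"
    using assms(8) True sg unfolding signed_height_def \<sigma>_def[symmetric] by auto
  obtain T1 where T1: "T1 \<in> M" "bip_proj nf nv T1 \<sigma> x1 s"
    using get_face[OF assms(6)] unfolding \<sigma>_def by blast
  obtain T2 where T2: "T2 \<in> M" "bip_proj nf nv T2 \<sigma> x2 s"
    using get_face[OF assms(7)] True unfolding \<sigma>_def by auto
  obtain \<alpha> :: "nat \<Rightarrow> real" and l where A: "\<alpha> 0 > 0" "\<alpha> 1 > 0" "\<alpha> 2 > 0" "\<alpha> 0 + \<alpha> 1 + \<alpha> 2 = 1"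
     "s = \<alpha> 0 *\<^sub>R vtx T1 0 + \<alpha> 1 *\<^sub>R vtx T1 1 + \<alpha> 2 *\<^sub>R vtx T1 2" "l \<ge> 0"
     "x1 = s + l *\<^sub>R (\<alpha> 0 *\<^sub>R align_dir nf nv T1 \<sigma> 0 + \<alpha> 1 *\<^sub>R align_dir nf nv T1 \<sigma> 1
                      + \<alpha> 2 *\<^sub>R align_dir nf nv T1 \<sigma> 2)"
    using rep[OF assms(4) T1(1) sg T1(2)] by blast
  obtain \<beta> :: "nat \<Rightarrow> real" and k where B: "\<beta> 0 > 0" "\<beta> 1 > 0" "\<beta> 2 > 0" "\<beta> 0 + \<beta> 1 + \<beta> 2 = 1"
     "s = \<beta> 0 *\<^sub>R vtx T2 0 + \<beta> 1 *\<^sub>R vtx T2 1 + \<beta> 2 *\<^sub>R vtx T2 2" "k \<ge> 0"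
     "x2 = s + k *\<^sub>R (\<beta> 0 *\<^sub>R align_dir nf nv T2 \<sigma> 0 + \<beta> 1 *\<^sub>R align_dir nf nv T2 \<sigma> 1
                      + \<beta> 2 *\<^sub>R align_dir nf nv T2 \<sigma> 2)"
    using rep[OF assms(5) T2(1) sg T2(2)] by blast
  have "s \<in> tri T2" by (rule in_tri[where \<alpha>=\<beta>]) (use B in auto)
  have TT: "T1 = T2"
    by (rule face_eq[OF assms(1) T1(1) T2(1) A(1-5)]) fact
  have nc: "\<not> collinear {vtx T1 0, vtx T1 1, vtx T1 2}"
    using assms(1) T1 unfolding watertight_mesh_def verts_def by blast
  have eq: "\<alpha> 0 = \<beta> 0 \<and> \<alpha> 1 = \<beta> 1 \<and> \<alpha> 2 = \<beta> 2"
    by (rule bary_unique[OF nc]) (use A(4,5) B(4,5) TT in simp_all)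
  define w where "w = \<alpha> 0 *\<^sub>R align_dir nf nv T1 \<sigma> 0 + \<alpha> 1 *\<^sub>R align_dir nf nv T1 \<sigma> 1
                      + \<alpha> 2 *\<^sub>R align_dir nf nv T1 \<sigma> 2"
  have x1e: "x1 - s = l *\<^sub>R w" using A(7) unfolding w_def by simp
  have x2e: "x2 - s = k *\<^sub>R w" using B(7) eq TT unfolding w_def by simp
  have "l * norm w = k * norm w" using nn x1e x2e A(6) B(6) by simp
  hence "l = k \<or> w = 0" by auto
  hence "x1 - s = x2 - s" using x1e x2e by auto
  thus ?thesis by simp
qed

end
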